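(* Let $q,t$ be nonzero complex numbers, neither a root of unity, with $\arg q,\arg t\in[0,2\pi)$. For $h\in\mathbb{C}$ put $D(q,t,h)=\{(r,s)\in\mathbb{Z}_{\ge1}^2: h^2=h_{r,s}^2\}$, where $h_{r,s}=t^{r/2}q^{-s/2}+t^{-r/2}q^{s/2}$. Then $\#D(q,t,h)\le1$ for every $h\in\mathbb{C}$ in each of the following cases: (i) $|q|\ne1$ and either $\log|t|/\log|q|\notin\mathbb{Q}$ or $\arg t-\arg q\cdot\frac{\log|t|}{\log|q|}\notin2\pi\mathbb{Q}$; (ii) $|q|\ne1$, $|t|=1$ and $\arg t\notin2\pi\mathbb{Q}$; (iii) $|q|=1$, $|t|\ne1$ and $\arg q\notin2\pi\mathbb{Q}$.
   Context: Here $h_{r,s}^2=(t^{r}q^{-s})+2+(t^{r}q^{-s})^{-1}$, so $h_{r,s}^2$ does not depend on the choice of square roots $t^{1/2},q^{1/2}$. *)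

theory Defs
  imports "HOL-Analysis.Analysis"
begin

definition arg0 :: "complex \<Rightarrow> real" where
  "arg0 z = (if Arg z < 0 then Arg z + 2 * pi else Arg z)"

definition root_of_unity :: "complex \<Rightarrow> bool" where
  "root_of_unity z \<longleftrightarrow> (\<exists>n::nat. n > 0 \<and> z ^ n = 1)"

text \<open>h_{r,s}^2 = t^r q^{-s} + 2 + (t^r q^{-s})^{-1}, independent of square roots.\<close>
definition hsq :: "complex \<Rightarrow> complex \<Rightarrow> int \<Rightarrow> int \<Rightarrow> complex" where
  "hsq q t r s = t powi r * q powi (-s) + 2 + inverse (t powi r * q powi (-s))"

definition Dset :: "complex \<Rightarrow> complex \<Rightarrow> complex \<Rightarrow> (int \<times> int) set" where
  "Dset q t h = {(r, s). r \<ge> 1 \<and> s \<ge> 1 \<and> h ^ 2 = hsq q t r s}"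

end

theory Submission
  imports Defs "HOL-Library.Real_Mod"
begin

lemma nru_powi:
  assumes "\<not> root_of_unity z" "z \<noteq> 0" "z powi b = 1"
  shows "b = 0"
proof (rule ccontr)
  assume b: "b \<noteq> 0"
  show False
  proof (cases "b \<ge> 0")
    case True
    then have "z ^ nat b = 1" using assms(3) by (simp add: power_int_def)
    moreover have "nat b > 0" using True b by simp
    ultimately show False using assms(1) unfolding root_of_unity_def by blast
  next
    case False
    then have "inverse (z ^ nat (-b)) = 1" using assms(3) by (simp add: power_int_def power_inverse)
    then have "z ^ nat (-b) = 1" by (metis inverse_1 inverse_inverse_eq)
    moreover have "nat (-b) > 0" using False by simp
    ultimately show False using assms(1) unfolding root_of_unity_def by blast
  qed
qed

lemma polar0: "z = of_real (cmod z) * cis (arg0 z)"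
proof -
  have "cis (arg0 z) = cis (Arg z)"
    by (simp add: arg0_def cis_mult[symmetric])
  then show ?thesis using rcis_cmod_Arg[of z] by (simp add: rcis_def)
qed

lemma ln_powi: "(x::real) > 0 \<Longrightarrow> ln (x powi a) = of_int a * ln x"
  by (metis ln_powr powr_real_of_int' less_imp_le less_irrefl)

lemma polar_powi: "z powi a = of_real (cmod z powi a) * cis (of_int a * arg0 z)"
proof -
  have "z powi a = (of_real (cmod z) * cis (arg0 z)) powi a" using polar0[of z] by simp
  also have "\<dots> = of_real (cmod z powi a) * cis (of_int a * arg0 z)"
    by (simp add: power_int_mult_distrib cis_power_int)
  finally show ?thesis .
qed

lemma indep:
  fixes q t :: complex
  assumes "q \<noteq> 0" and "t \<noteq> 0"
    and "\<not> root_of_unity q" and "\<not> root_of_unity t"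
    and cases:
      "(cmod q \<noteq> 1 \<and>
          (ln (cmod t) / ln (cmod q) \<notin> \<rat> \<or>
           (arg0 t - arg0 q * (ln (cmod t) / ln (cmod q))) / (2 * pi) \<notin> \<rat>))
       \<or> (cmod q \<noteq> 1 \<and> cmod t = 1 \<and> arg0 t / (2 * pi) \<notin> \<rat>)
       \<or> (cmod q = 1 \<and> cmod t \<noteq> 1 \<and> arg0 q / (2 * pi) \<notin> \<rat>)"
    and eq: "t powi a = q powi b"
  shows "a = 0 \<and> b = 0"
proof (cases "a = 0 \<or> b = 0")
  case True
  then show ?thesis
  proof
    assume a: "a = 0"
    then have "q powi b = 1" using eq by simp
    then show ?thesis using a nru_powi assms by blast
  next
    assume b: "b = 0"
    then have "t powi a = 1" using eq by simp
    then show ?thesis using b nru_powi assms by blast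
  qed
next
  case False
  then have a0: "a \<noteq> 0" and b0: "b \<noteq> 0" by auto
  have tp: "cmod t > 0" and qp: "cmod q > 0" using assms by auto
  have "cmod (t powi a) = cmod (q powi b)" using eq by simp
  then have m: "cmod t powi a = cmod q powi b" by (simp add: norm_power_int)
  then have lneq: "of_int a * ln (cmod t) = of_int b * ln (cmod q)"
    using ln_powi tp qp by metis
  have mpos: "cmod t powi a > 0" using tp by simp
  have "of_real (cmod t powi a) * cis (of_int a * arg0 t) = of_real (cmod q powi b) * cis (of_int b * arg0 q)"
    using eq polar_powi by metis
  then have "cis (of_int a * arg0 t) = cis (of_int b * arg0 q)"
    using m mpos by (metis mult_cancel_left of_real_eq_0_iff less_irrefl)
  then have "cis (of_int a * arg0 t - of_int b * arg0 q) = 1"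
    by (simp add: cis_divide[symmetric])
  then obtain k :: int where k: "of_int a * arg0 t - of_int b * arg0 q = of_int k * (2 * pi)"
    using cis_eq_1_iff by blast
  show ?thesis
  proof -
    have False
    proof (cases "cmod q = 1")
      case True
      then have "ln (cmod q) = 0" by simp
      then have "ln (cmod t) = 0" using lneq a0 by simp
      then have "cmod t = 1" using tp by simp
      then show False using cases True by simp
    next
      case qn: False
      have lq: "ln (cmod q) \<noteq> 0" using qn qp by simp
      have c: "ln (cmod t) / ln (cmod q) = of_int b / of_int a"
        using lneq lq a0 by (simp add: field_simps)
      show False
      proof (cases "cmod t = 1")
        case True
        then have "of_int b * ln (cmod q) = 0" using lneq by simp
        then show False using lq b0 by simp
      next
        case tn: False
        have r1: "ln (cmod t) / ln (cmod q) \<in> \<rat>" using c by simp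
        have "(arg0 t - arg0 q * (of_int b / of_int a)) / (2 * pi) = of_int k / of_int a"
          using k a0 by (simp add: field_simps)
        then have r2: "(arg0 t - arg0 q * (ln (cmod t) / ln (cmod q))) / (2 * pi) \<in> \<rat>"
          using c by simp
        show False using cases r1 r2 qn tn by blast
      qed
    qed
    then show ?thesis ..
  qed
qed

lemma hsq_eq:
  fixes x y :: complex
  assumes "x \<noteq> 0" "y \<noteq> 0" "x + 2 + inverse x = y + 2 + inverse y"
  shows "x = y \<or> x * y = 1"
proof -
  have "(x - y) * (x * y - 1) = 0"
    using assms by (simp add: field_simps)
  then show ?thesis by simp
qed

theorem lemmaA7:
  fixes q t :: complex
  assumes "q \<noteq> 0" and "t \<noteq> 0"
    and "\<not> root_of_unity q" and "\<not> root_of_unity t"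
    and cases:
      "(cmod q \<noteq> 1 \<and>
          (ln (cmod t) / ln (cmod q) \<notin> \<rat> \<or>
           (arg0 t - arg0 q * (ln (cmod t) / ln (cmod q))) / (2 * pi) \<notin> \<rat>))
       \<or> (cmod q \<noteq> 1 \<and> cmod t = 1 \<and> arg0 t / (2 * pi) \<notin> \<rat>)
       \<or> (cmod q = 1 \<and> cmod t \<noteq> 1 \<and> arg0 q / (2 * pi) \<notin> \<rat>)"
  shows "\<forall>h::complex. finite (Dset q t h) \<and> card (Dset q t h) \<le> 1"
proof
  fix h :: complex
  have I: "\<And>a b. t powi a = q powi b \<Longrightarrow> a = 0 \<and> b = 0"
    using indep[OF assms] by blast
  have uniq: "u = v" if uv: "u \<in> Dset q t h" "v \<in> Dset q t h" for u v
  proof -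
    obtain r s where u: "u = (r, s)" "r \<ge> 1" "s \<ge> 1" "h ^ 2 = hsq q t r s"
      using uv(1) unfolding Dset_def by blast
    obtain r' s' where v: "v = (r', s')" "r' \<ge> 1" "s' \<ge> 1" "h ^ 2 = hsq q t r' s'"
      using uv(2) unfolding Dset_def by blast
    define x where "x = t powi r * q powi (-s)"
    define y where "y = t powi r' * q powi (-s')"
    have x0: "x \<noteq> 0" and y0: "y \<noteq> 0" using assms by (auto simp: x_def y_def)
    have "x + 2 + inverse x = y + 2 + inverse y"
      using u(4) v(4) by (simp add: hsq_def x_def y_def)
    then have "x = y \<or> x * y = 1" using hsq_eq x0 y0 by blast
    then show ?thesis
    proof
      assume "x = y"
      then have "t powi (r - r') = q powi (s - s')"
        using assms(1,2) by (simp add: x_def y_def power_int_diff power_int_minus field_simps)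
      then have "r - r' = 0 \<and> s - s' = 0" using I by blast
      then show ?thesis using u v by simp
    next
      assume "x * y = 1"
      then have "t powi (r + r') = q powi (s + s')"
        using assms(1,2) by (simp add: x_def y_def power_int_add power_int_minus field_simps)
      then have "r + r' = 0" using I by blast
      then show ?thesis using u v by simp
    qed
  qed
  have fin: "finite (Dset q t h)"
  proof (cases "Dset q t h = {}")
    case False
    then obtain u where "u \<in> Dset q t h" by blast
    then have "Dset q t h \<subseteq> {u}" using uniq by blast
    then show ?thesis using finite_subset by blast
  qed simp
  then show "finite (Dset q t h) \<and> card (Dset q t h) \<le> 1"
    using card_le_Suc0_iff_eq[OF fin] uniq by simp
qed

end
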